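(* Let $m\ge1$, $0\le q\le n$, $p\ge0$ and $1\le k\le n-q$. For $1\le i\le m$ and $1\le j\le n$, $L_{i,2j-1+m}f_{k,p,q}=2k\left(\frac M2+p+q+k-1\right)f_{k-1,p+1,q+1}\,x_i\,\grave{x}_{2j-1}$, where $M=m-2n$.
   Context: On $\mathbb{R}^{m|2n}$ with even $x_1..x_m$ and odd $\grave{x}_1..\grave{x}_{2n}$: $r^2=\sum x_i^2$, $\theta^2=-\sum_{l=1}^n\grave{x}_{2l-1}\grave{x}_{2l}$. The operator is $L_{i,2j-1+m}=2x_i\partial_{\grave{x}_{2j}}-\grave{x}_{2j-1}\partial_{x_i}$. For $0\le k\le n-q$, $f_{k,p,q}=\sum_{s=0}^ka_sr^{2k-2s}\theta^{2s}$ with $a_s=\binom ks\frac{(n-q-s)!}{\Gamma(\frac m2+p+k-s)}\frac{\Gamma(\frac m2+p+k)}{(n-q-k)!}$. *)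

theory Defs
  imports "HOL-Analysis.Analysis" "HOL-Library.Function_Algebras"
begin

text \<open>A superfunction is represented by its coefficients with respect to the
  Grassmann monomials: F S x is the coefficient of the ordered monomial
  xgr_{s1} xgr_{s2} ... (s1 < s2 < ..., S = {s1,s2,...}) evaluated at the even point x.
  Even variables are x 1, ..., x m; odd variables have indices 1..2n.\<close>

type_synonym sfun = "nat set \<Rightarrow> (nat \<Rightarrow> real) \<Rightarrow> real"

text \<open>Sign of xgr_A * xgr_B = sgn * xgr_(A Un B) for disjoint A, B.\<close>
definition grsign :: "nat set \<Rightarrow> nat set \<Rightarrow> real" where
  "grsign A B = (-1) ^ card {(a, b). a \<in> A \<and> b \<in> B \<and> b < a}"

definition sf_mult :: "sfun \<Rightarrow> sfun \<Rightarrow> sfun" where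
  "sf_mult F G = (\<lambda>S x. \<Sum>A\<in>Pow S. grsign A (S - A) * F A x * G (S - A) x)"

definition sf_const :: "real \<Rightarrow> sfun" where
  "sf_const c = (\<lambda>S x. if S = {} then c else 0)"

definition sf_scale :: "real \<Rightarrow> sfun \<Rightarrow> sfun" where
  "sf_scale c F = (\<lambda>S x. c * F S x)"

primrec sf_pow :: "sfun \<Rightarrow> nat \<Rightarrow> sfun" where
  "sf_pow F 0 = sf_const 1"
| "sf_pow F (Suc k) = sf_mult F (sf_pow F k)"

definition even_var :: "nat \<Rightarrow> sfun" where
  "even_var i = (\<lambda>S x. if S = {} then x i else 0)"

definition odd_var :: "nat \<Rightarrow> sfun" where
  "odd_var j = (\<lambda>S x. if S = {j} then 1 else 0)"

definition sf_dx :: "nat \<Rightarrow> sfun \<Rightarrow> sfun" where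
  "sf_dx i F = (\<lambda>S x. deriv (\<lambda>t. F S (x(i := t))) (x i))"

text \<open>(Left) derivative with respect to the odd variable xgr_j:
  it maps xgr_S to (-1)^{#{s in S. s < j}} xgr_(S - {j}) if j in S, and to 0 otherwise.\<close>
definition sf_dodd :: "nat \<Rightarrow> sfun \<Rightarrow> sfun" where
  "sf_dodd j F = (\<lambda>S x. if j \<in> S then 0
                         else (-1) ^ card {s \<in> S. s < j} * F (insert j S) x)"

definition r2 :: "nat \<Rightarrow> sfun" where
  "r2 m = (\<Sum>i=1..m. sf_mult (even_var i) (even_var i))"

definition theta2 :: "nat \<Rightarrow> sfun" where
  "theta2 n = - (\<Sum>l=1..n. sf_mult (odd_var (2*l - 1)) (odd_var (2*l)))"

text \<open>L_{i,2j-1+m} = 2 x_i d/d xgr_{2j} - xgr_{2j-1} d/dx_i.\<close>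
definition Lop :: "nat \<Rightarrow> nat \<Rightarrow> sfun \<Rightarrow> sfun" where
  "Lop i j F = sf_mult (sf_scale 2 (even_var i)) (sf_dodd (2*j) F)
             - sf_mult (odd_var (2*j - 1)) (sf_dx i F)"

definition coef_a :: "nat \<Rightarrow> nat \<Rightarrow> nat \<Rightarrow> nat \<Rightarrow> nat \<Rightarrow> nat \<Rightarrow> real" where
  "coef_a m n k p q s =
     real (k choose s) * (fact (n - q - s) / Gamma (real m / 2 + real p + real k - real s))
       * (Gamma (real m / 2 + real p + real k) / fact (n - q - k))"

definition f_kpq :: "nat \<Rightarrow> nat \<Rightarrow> nat \<Rightarrow> nat \<Rightarrow> nat \<Rightarrow> sfun" where
  "f_kpq m n k p q = (\<Sum>s=0..k. sf_scale (coef_a m n k p q s)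
                         (sf_mult (sf_pow (r2 m) (k - s)) (sf_pow (theta2 n) s)))"

end

theory Submission
  imports Defs
begin


lemma fsum_apply: "(\<Sum>a\<in>A. f a) x = (\<Sum>a\<in>A. f a x)"
  by (induction A rule: infinite_finite_induct) auto

definition pe :: "((nat\<Rightarrow>real)\<Rightarrow>real) \<Rightarrow> sfun" where
  "pe g = (\<lambda>S x. if S = {} then g x else 0)"

lemma grsign_empty1[simp]: "grsign {} B = 1" by (simp add: grsign_def)
lemma grsign_empty2[simp]: "grsign A {} = 1" by (simp add: grsign_def)

lemma mult_pe_left: "sf_mult (pe g) F = (\<lambda>S x. if finite S then g x * F S x else 0)"
proof (intro ext)
  fix S x
  show "sf_mult (pe g) F S x = (if finite S then g x * F S x else 0)"
  proof (cases "finite S")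
    case True
    have "sf_mult (pe g) F S x = (\<Sum>A\<in>Pow S. if A = {} then g x * F S x else 0)"
      unfolding sf_mult_def pe_def by (rule sum.cong) auto
    also have "\<dots> = g x * F S x" using True by (simp add: sum.delta)
    finally show ?thesis using True by simp
  qed (simp add: sf_mult_def)
qed

lemma mult_pe_right: "sf_mult F (pe g) = (\<lambda>S x. if finite S then F S x * g x else 0)"
proof (intro ext)
  fix S x
  show "sf_mult F (pe g) S x = (if finite S then F S x * g x else 0)"
  proof (cases "finite S")
    case True
    have "sf_mult F (pe g) S x = (\<Sum>A\<in>Pow S. if A = S then F S x * g x else 0)"
      unfolding sf_mult_def pe_def by (rule sum.cong) auto
    also have "\<dots> = F S x * g x" using True by (simp add: sum.delta)
    finally show ?thesis using True by simp
  qed (simp add: sf_mult_def)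
qed

lemma grsign_single1: "grsign {a} B = (-1) ^ card {b\<in>B. b < a}"
proof -
  have "{(a', b). a' \<in> {a} \<and> b \<in> B \<and> b < a'} = Pair a ` {b\<in>B. b < a}" by auto
  moreover have "card (Pair a ` {b\<in>B. b < a}) = card {b\<in>B. b < a}"
    by (rule card_image) (auto simp: inj_on_def)
  ultimately show ?thesis unfolding grsign_def by simp
qed

lemma grsign_single2: "grsign B {a} = (-1) ^ card {b\<in>B. a < b}"
proof -
  have "{(a', b). a' \<in> B \<and> b \<in> {a} \<and> b < a'} = (\<lambda>b. (b, a)) ` {b\<in>B. a < b}" by auto
  moreover have "card ((\<lambda>b. (b, a)) ` {b\<in>B. a < b}) = card {b\<in>B. a < b}"
    by (rule card_image) (auto simp: inj_on_def)
  ultimately show ?thesis unfolding grsign_def by simp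
qed

lemma mult_odd_left: "sf_mult (odd_var a) F =
   (\<lambda>S x. if finite S \<and> a \<in> S then (-1) ^ card {b\<in>S. b < a} * F (S - {a}) x else 0)"
proof (intro ext)
  fix S x
  show "sf_mult (odd_var a) F S x = (if finite S \<and> a \<in> S then (-1) ^ card {b\<in>S. b < a} * F (S - {a}) x else 0)"
  proof (cases "finite S")
    case True
    have "sf_mult (odd_var a) F S x = (\<Sum>A\<in>Pow S. if A = {a} then grsign {a} (S - {a}) * F (S - {a}) x else 0)"
      unfolding sf_mult_def odd_var_def by (rule sum.cong) auto
    also have "\<dots> = (if a \<in> S then grsign {a} (S - {a}) * F (S - {a}) x else 0)"
      using True by (simp add: sum.delta)
    moreover have "{b\<in>S-{a}. b < a} = {b\<in>S. b < a}" by auto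
    ultimately show ?thesis using True by (simp add: grsign_single1)
  qed (simp add: sf_mult_def)
qed

lemma mult_odd_right: "sf_mult F (odd_var a) =
   (\<lambda>S x. if finite S \<and> a \<in> S then (-1) ^ card {b\<in>S. a < b} * F (S - {a}) x else 0)"
proof (intro ext)
  fix S x
  show "sf_mult F (odd_var a) S x = (if finite S \<and> a \<in> S then (-1) ^ card {b\<in>S. a < b} * F (S - {a}) x else 0)"
  proof (cases "finite S")
    case True
    have "sf_mult F (odd_var a) S x = (\<Sum>A\<in>Pow S. if A = S - {a} then (if a \<in> S then grsign (S - {a}) {a} * F (S - {a}) x else 0) else 0)"
      unfolding sf_mult_def odd_var_def by (rule sum.cong) auto
    also have "\<dots> = (if a \<in> S then grsign (S - {a}) {a} * F (S - {a}) x else 0)"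
      using True by (simp add: sum.delta)
    moreover have "{b\<in>S-{a}. a < b} = {b\<in>S. a < b}" by auto
    ultimately show ?thesis using True by (simp add: grsign_single2)
  qed (simp add: sf_mult_def)
qed

lemma pe_mult: "sf_mult (pe g) (pe h) = pe (\<lambda>x. g x * h x)"
  by (simp add: mult_pe_left) (auto simp: pe_def fun_eq_iff)

lemma pow_pe: "sf_pow (pe g) a = pe (\<lambda>x. g x ^ a)"
proof (induction a)
  case 0 then show ?case by (simp add: sf_const_def pe_def fun_eq_iff)
next
  case (Suc a) then show ?case by (simp add: pe_mult)
qed

definition RR :: "nat \<Rightarrow> (nat\<Rightarrow>real) \<Rightarrow> real" where "RR m x = (\<Sum>i=1..m. x i * x i)"

lemma r2_pe: "r2 m = pe (RR m)"
  unfolding r2_def RR_def even_var_def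
proof (intro ext)
  fix S x
  show "(\<Sum>i = 1..m. sf_mult (\<lambda>S x. if S = {} then x i else 0) (\<lambda>S x. if S = {} then x i else 0)) S x = pe (\<lambda>x. \<Sum>i = 1..m. x i * x i) S x"
    by (cases "S = {}") (auto simp add: fsum_apply mult_pe_left[unfolded pe_def] pe_def split: if_splits intro!: sum.neutral)
qed



definition ps :: "nat set \<Rightarrow> nat set" where "ps T = {y. 0 < y \<and> (y+1) div 2 \<in> T}"
definition pr :: "nat \<Rightarrow> nat set" where "pr l = {2*l-1, 2*l}"
definition good :: "nat \<Rightarrow> nat \<Rightarrow> nat set \<Rightarrow> bool" where
  "good n s S \<longleftrightarrow> (\<exists>T. T \<subseteq> {1..n} \<and> card T = s \<and> S = ps T)"
definition thf :: "nat \<Rightarrow> nat \<Rightarrow> nat set \<Rightarrow> real" where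
  "thf n s S = (if good n s S then (-1)^s * fact s else 0)"

lemma hf_iff: "0 < (y::nat) \<Longrightarrow> 1 \<le> l \<Longrightarrow> ((y+1) div 2 = l) = (y = 2*l-1 \<or> y = 2*l)"
  by presburger

lemma mem_ps: "y \<in> ps T \<longleftrightarrow> 0 < y \<and> (y+1) div 2 \<in> T" by (simp add: ps_def)

lemma ps_finite: "T \<subseteq> {1..n} \<Longrightarrow> finite (ps T)"
proof -
  assume "T \<subseteq> {1..n}"
  then have "ps T \<subseteq> {..2*n}"
  proof (intro subsetI)
    fix y assume "T \<subseteq> {1..n}" "y \<in> ps T"
    then have "(y+1) div 2 \<le> n" by (auto simp: ps_def)
    then show "y \<in> {..2*n}" by simp
  qed
  then show ?thesis using finite_subset by blast
qed

lemma odd_mem_ps: "1 \<le> l \<Longrightarrow> (2*l-1 \<in> ps T) = (l \<in> T)"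
  using hf_iff[of "2*l-1" l] by (simp add: ps_def)
lemma even_mem_ps: "1 \<le> l \<Longrightarrow> (2*l \<in> ps T) = (l \<in> T)"
  by (simp add: ps_def)

lemma pr_sub: "1 \<le> l \<Longrightarrow> (pr l \<subseteq> ps T) = (l \<in> T)"
  using odd_mem_ps[of l T] even_mem_ps[of l T] by (auto simp: pr_def)

lemma ps_minus: "1 \<le> l \<Longrightarrow> ps T - pr l = ps (T - {l})"
  unfolding ps_def pr_def using hf_iff by auto

lemma ps_insert: "1 \<le> l \<Longrightarrow> ps (insert l T) = pr l \<union> ps T"
  unfolding ps_def pr_def using hf_iff by auto

lemma ps_empty[simp]: "ps {} = {}" by (simp add: ps_def)

lemma ps_inj: "0 \<notin> T \<Longrightarrow> 0 \<notin> T' \<Longrightarrow> ps T = ps T' \<Longrightarrow> T = T'"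
proof -
  assume a: "0 \<notin> T" "0 \<notin> T'" "ps T = ps T'"
  have "T = {l. 2*l \<in> ps T}" if "0 \<notin> T" for T using that by (auto simp: ps_def) (metis gr0I)
  then show ?thesis using a by metis
qed

lemma good_fin: "good n s S \<Longrightarrow> finite S"
  unfolding good_def using ps_finite by blast

lemma good0: "good n 0 S \<longleftrightarrow> S = {}"
proof
  assume "good n 0 S"
  then obtain T where "T \<subseteq> {1..n}" "card T = 0" "S = ps T" by (auto simp: good_def)
  then have "T = {}" using finite_subset[of T "{1..n}"] by auto
  then show "S = {}" using \<open>S = ps T\<close> by simp
next
  assume "S = {}" then show "good n 0 S" unfolding good_def by (intro exI[of _ "{}"]) auto
qed

lemma sf_mult_pair: "1 \<le> l \<Longrightarrow> sf_mult (odd_var (2*l-1)) (odd_var (2*l)) = (\<lambda>S x. if S = pr l then 1 else 0)"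
proof (intro ext)
  fix S x assume l: "1 \<le> l"
  have e: "(2*l-1 \<in> S \<and> S - {2*l-1} = {2*l}) = (S = pr l)" using l by (auto simp: pr_def)
  have c: "{b\<in>pr l. b < 2*l-1} = {}" by (auto simp: pr_def)
  show "sf_mult (odd_var (2*l-1)) (odd_var (2*l)) S x = (if S = pr l then 1 else 0)"
  proof (cases "S = pr l")
    case True
    then have "finite S" "2*l-1 \<in> S" "S - {2*l-1} = {2*l}" using e by (auto simp: pr_def)
    then have "sf_mult (odd_var (2*l-1)) (odd_var (2*l)) S x = (-1)^card{b\<in>S. b<2*l-1} * odd_var (2*l) (S - {2*l-1}) x"
      unfolding mult_odd_left by simp
    also have "\<dots> = 1" using True c \<open>S - {2*l-1} = {2*l}\<close> by (simp only: odd_var_def) simp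
    finally show ?thesis using True by simp
  next
    case False
    then have "\<not> (2*l-1 \<in> S \<and> S - {2*l-1} = {2*l})" using e by blast
    then show ?thesis unfolding mult_odd_left using False by (simp add: odd_var_def)
  qed
qed

lemma theta2_eq: "theta2 n = (\<lambda>S x. - (\<Sum>l=1..n. if S = pr l then 1 else 0))"
proof -
  have "(\<Sum>l=1..n. sf_mult (odd_var (2*l-1)) (odd_var (2*l))) = (\<Sum>l=1..n. (\<lambda>S x. if S = pr l then 1 else 0))"
    by (rule sum.cong, simp, rule sf_mult_pair, simp)
  then show ?thesis unfolding theta2_def by (simp add: fun_eq_iff fsum_apply)
qed

lemma grsign_pair: "1 \<le> l \<Longrightarrow> finite B \<Longrightarrow> 2*l-1 \<notin> B \<Longrightarrow> grsign (pr l) B = 1"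
proof -
  assume l: "1 \<le> l" and B: "finite B" "2*l-1 \<notin> B"
  define X where "X = {b\<in>B. b < 2*l-1}"
  have "{(a, b). a \<in> pr l \<and> b \<in> B \<and> b < a} = Pair (2*l-1) ` X \<union> Pair (2*l) ` X"
  proof -
    have lt: "b < 2*l-1" if "b \<in> B" "b < 2*l" for b using B l that by (cases "b = 2*l-1") auto
    show ?thesis using l lt unfolding X_def pr_def by auto
  qed
  moreover have "card (Pair (2*l-1) ` X \<union> Pair (2*l) ` X) = card X + card X"
  proof -
    have f: "finite X" using B X_def by simp
    have "card (Pair (2*l-1) ` X \<union> Pair (2*l) ` X) = card (Pair (2*l-1) ` X) + card (Pair (2*l) ` X)"
      by (rule card_Un_disjoint) (use f l in auto)
    moreover have "card (Pair a ` X) = card X" for a by (rule card_image) (auto simp: inj_on_def)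
    ultimately show ?thesis by metis
  qed
  ultimately show ?thesis unfolding grsign_def by (simp add: power_add)
qed

lemma theta_mult: "finite S \<Longrightarrow> sf_mult (theta2 n) G S x =
   - (\<Sum>l=1..n. if pr l \<subseteq> S then G (S - pr l) x else 0)"
proof -
  assume S: "finite S"
  have "sf_mult (theta2 n) G S x = (\<Sum>A\<in>Pow S. \<Sum>l=1..n. - (if A = pr l then grsign A (S - A) * G (S - A) x else 0))"
    unfolding sf_mult_def theta2_eq
    by (rule sum.cong) (auto simp: sum_distrib_left sum_distrib_right sum_negf intro!: sum.cong)
  also have "\<dots> = - (\<Sum>l=1..n. \<Sum>A\<in>Pow S. (if A = pr l then grsign A (S - A) * G (S - A) x else 0))"
    by (subst sum.swap) (simp add: sum_negf)
  also have "\<dots> = - (\<Sum>l=1..n. if pr l \<subseteq> S then G (S - pr l) x else 0)"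
  proof -
    have "(\<Sum>A\<in>Pow S. (if A = pr l then grsign A (S - A) * G (S - A) x else 0)) =
          (if pr l \<subseteq> S then G (S - pr l) x else 0)" if "l \<in> {1..n}" for l
    proof -
      have "(\<Sum>A\<in>Pow S. (if A = pr l then grsign A (S - A) * G (S - A) x else 0)) =
         (if pr l \<subseteq> S then grsign (pr l) (S - pr l) * G (S - pr l) x else 0)"
        using S by (simp add: sum.delta)
      moreover have "grsign (pr l) (S - pr l) = 1"
        using that S by (intro grsign_pair) (auto simp: pr_def)
      ultimately show ?thesis by simp
    qed
    then show ?thesis by simp
  qed
  finally show ?thesis .
qed

lemma rec_thf: "finite S \<Longrightarrow> - (\<Sum>l=1..n. if pr l \<subseteq> S then thf n s (S - pr l) else 0) = thf n (Suc s) S"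
proof (cases "good n (Suc s) S")
  case True
  then obtain T where T: "T \<subseteq> {1..n}" "card T = Suc s" "S = ps T" by (auto simp: good_def)
  have fT: "finite T" using T finite_subset by blast
  have "(\<Sum>l=1..n. if pr l \<subseteq> S then thf n s (S - pr l) else 0) = (\<Sum>l=1..n. if l \<in> T then (-1)^s * fact s else 0)"
  proof (rule sum.cong)
    fix l assume l: "l \<in> {1..n}"
    show "(if pr l \<subseteq> S then thf n s (S - pr l) else 0) = (if l \<in> T then (-1)^s * fact s else 0)"
    proof (cases "l \<in> T")
      case True
      have "good n s (S - pr l)" unfolding good_def
        using T True fT l by (intro exI[of _ "T - {l}"]) (auto simp: ps_minus)
      then show ?thesis using True T l by (simp add: pr_sub thf_def)
    qed (use T l in \<open>simp add: pr_sub\<close>)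
  qed simp
  also have "\<dots> = real (card T) * ((-1)^s * fact s)"
    using T by (simp add: sum.If_cases Int_absorb1)
  finally show ?thesis using T True by (simp add: thf_def)
next
  case False
  have "(if pr l \<subseteq> S then thf n s (S - pr l) else 0) = 0" if l: "l \<in> {1..n}" for l
  proof (rule ccontr)
    assume "(if pr l \<subseteq> S then thf n s (S - pr l) else 0) \<noteq> 0"
    then have sub: "pr l \<subseteq> S" and g: "good n s (S - pr l)" by (auto simp: thf_def split: if_splits)
    then obtain T where T: "T \<subseteq> {1..n}" "card T = s" "S - pr l = ps T" by (auto simp: good_def)
    have fT: "finite T" using T finite_subset by blast
    have lT: "l \<notin> T" using T(3) l even_mem_ps[of l T] by (auto simp: pr_def)
    have "S = ps (insert l T)" using sub T(3) l by (auto simp: ps_insert)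
    then have "good n (Suc s) S" unfolding good_def using T l lT fT by (intro exI[of _ "insert l T"]) auto
    then show False using False by simp
  qed
  then show ?thesis using False by (simp add: thf_def)
qed

lemma theta_pow: "sf_pow (theta2 n) s = (\<lambda>S x. thf n s S)"
proof (induction s)
  case 0 then show ?case by (auto simp: fun_eq_iff sf_const_def thf_def good0)
next
  case (Suc s)
  show ?case
  proof (intro ext)
    fix S x
    show "sf_pow (theta2 n) (Suc s) S x = thf n (Suc s) S"
    proof (cases "finite S")
      case True then show ?thesis using Suc rec_thf[OF True, of n s] by (simp add: theta_mult)
    next
      case False then show ?thesis using good_fin by (auto simp: sf_mult_def thf_def)
    qed
  qed
qed



lemma coef_id:
  assumes m: "1 \<le> m" and k: "1 \<le> k" "k \<le> n - q" and t: "t < k"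
  shows "coef_a m n k p q (Suc t) * real (Suc t) - coef_a m n k p q t * real (k - t) =
    real k * ((real m - 2 * real n) / 2 + real p + real q + real k - 1) * coef_a m n (k-1) (p+1) (q+1) t"
proof -
  define N where "N = n - q"
  define \<alpha> where "\<alpha> = real m / 2 + real p + real k"
  define C where "C = real ((k-1) choose t)"
  define f :: real where "f = fact (N - Suc t)"
  define G where "G = Gamma \<alpha> / fact (N - k)"
  define g where "g = Gamma (\<alpha> - real t - 1)"
  have qn: "q \<le> n" "real N = real n - real q" using k by (auto simp: N_def)
  have pos: "\<alpha> - real t - 1 > 0" using t k m unfolding \<alpha>_def by (simp add: of_nat_less_iff[symmetric])
  have gpos: "g > 0" using pos by (simp add: g_def)
  have Gs: "Gamma (\<alpha> - real t) = (\<alpha> - real t - 1) * g"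
  proof -
    have "\<alpha> - real t - 1 \<notin> \<int>\<^sub>\<le>\<^sub>0" using pos by auto
    from Gamma_plus1[OF this] show ?thesis by (simp add: g_def)
  qed
  have c1: "real (k choose Suc t) * real (Suc t) = real k * C"
  proof -
    have "Suc (k-1) = k" using k by simp
    then have "(k choose Suc t) * Suc t = k * ((k-1) choose t)"
      using Suc_times_binomial_eq[of "k-1" t] by metis
    then have "real ((k choose Suc t) * Suc t) = real (k * ((k-1) choose t))" by simp
    then show ?thesis unfolding C_def of_nat_mult .
  qed
  have c2: "real (k choose t) * real (k - t) = real k * C"
    using binomial_absorb_comp[of k t] by (simp add: C_def mult.commute flip: of_nat_mult)
  have f2: "fact (N - t) = real (N - t) * f"
  proof -
    have "N - t = Suc (N - Suc t)" using k t unfolding N_def by linarith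
    then show ?thesis unfolding f_def by (simp add: fact_Suc)
  qed
  have Nt: "real (N - t) = real N - real t" using k t unfolding N_def by linarith
  have a1: "coef_a m n k p q (Suc t) = real (k choose Suc t) * (f / g) * G"
    unfolding coef_a_def f_def g_def G_def \<alpha>_def N_def by (simp add: algebra_simps)
  have a2: "coef_a m n k p q t = real (k choose t) * (fact (N - t) / Gamma (\<alpha> - real t)) * G"
    unfolding coef_a_def G_def \<alpha>_def N_def by simp
  have a3: "coef_a m n (k-1) (p+1) (q+1) t = C * (f / Gamma (\<alpha> - real t)) * G"
  proof -
    have e1: "real m / 2 + real (p+1) + real (k-1) - real t = \<alpha> - real t"
      "real m / 2 + real (p+1) + real (k-1) = \<alpha>" using k by (auto simp: \<alpha>_def)
    have e2: "n - (q+1) - t = N - Suc t" "n - (q+1) - (k-1) = N - k" using k unfolding N_def by auto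
    show ?thesis unfolding coef_a_def e1 e2 C_def f_def G_def by simp
  qed
  have "coef_a m n k p q (Suc t) * real (Suc t) - coef_a m n k p q t * real (k - t)
      = real k * C * f * G * (1 / g - (real N - real t) / ((\<alpha> - real t - 1) * g))"
    unfolding a1 a2 f2 Gs Nt using c1 c2 by (simp add: algebra_simps)
  also have "\<dots> = real k * C * f * G * ((\<alpha> - 1 - real N) / ((\<alpha> - real t - 1) * g))"
  proof -
    have aux: "\<And>d g b::real. d \<noteq> 0 \<Longrightarrow> g \<noteq> 0 \<Longrightarrow> 1/g - b/(d*g) = (d-b)/(d*g)"
      by (simp add: field_simps)
    have "1 / g - (real N - real t) / ((\<alpha> - real t - 1) * g) = ((\<alpha> - real t - 1) - (real N - real t)) / ((\<alpha> - real t - 1) * g)"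
      using pos gpos by (intro aux) auto
    also have "(\<alpha> - real t - 1) - (real N - real t) = \<alpha> - 1 - real N" by simp
    finally show ?thesis by simp
  qed
  also have "\<dots> = real k * ((real m - 2 * real n) / 2 + real p + real q + real k - 1) * coef_a m n (k-1) (p+1) (q+1) t"
  proof -
    have nN: "real n = real N + real q" using qn by simp
    show ?thesis unfolding a3 Gs nN using pos gpos by (simp add: \<alpha>_def field_simps)
  qed
  finally show ?thesis .
qed



lemma pr_ps_disj: "1 \<le> l \<Longrightarrow> l \<notin> T \<Longrightarrow> pr l \<inter> ps T = {}"
  using odd_mem_ps[of l T] even_mem_ps[of l T] by (auto simp: pr_def)

lemma card_pr: "1 \<le> l \<Longrightarrow> card (pr l) = 2" by (simp add: pr_def)

lemma card_ps: "finite T \<Longrightarrow> 0 \<notin> T \<Longrightarrow> card (ps T) = 2 * card T"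
proof (induction T rule: finite_induct)
  case empty then show ?case by simp
next
  case (insert l T)
  then have l: "1 \<le> l" by (cases l) auto
  have "T \<subseteq> {1..Max T}"
  proof
    fix x assume x: "x \<in> T"
    then have "x \<noteq> 0" using insert.prems by (metis insertCI)
    moreover have "x \<le> Max T" using x insert.hyps(1) by simp
    ultimately show "x \<in> {1..Max T}" by simp
  qed
  then have fin: "finite (ps T)" using ps_finite by blast
  have "card (ps (insert l T)) = card (pr l) + card (ps T)"
    unfolding ps_insert[OF l] by (rule card_Un_disjoint) (use fin pr_ps_disj[OF l insert(2)] in \<open>auto simp: pr_def\<close>)
  then show ?case using insert card_pr[OF l] by simp
qed

lemma lt_ps: "1 \<le> j \<Longrightarrow> {y \<in> ps T. y < 2*j-1} = ps {l\<in>T. l < j}"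
proof -
  assume j: "1 \<le> j"
  have h: "0 < y \<Longrightarrow> (y < 2*j-1) = ((y+1) div 2 < j)" for y using j by presburger
  show ?thesis
  proof (rule set_eqI)
    fix y show "(y \<in> {y \<in> ps T. y < 2*j-1}) = (y \<in> ps {l\<in>T. l < j})"
      unfolding ps_def mem_Collect_eq using h[of y] by blast
  qed
qed

lemma gt_ps: "1 \<le> j \<Longrightarrow> j \<notin> T \<Longrightarrow> {y \<in> ps T. 2*j-1 < y} = ps {l\<in>T. j < l}"
proof -
  assume j: "1 \<le> j" "j \<notin> T"
  have h: "0 < y \<Longrightarrow> (y+1) div 2 \<noteq> j \<Longrightarrow> (2*j-1 < y) = (j < (y+1) div 2)" for y using j by presburger
  show ?thesis
  proof (rule set_eqI)
    fix y show "(y \<in> {y \<in> ps T. 2*j-1 < y}) = (y \<in> ps {l\<in>T. j < l})"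
      unfolding ps_def mem_Collect_eq using h[of y] j by blast
  qed
qed

lemma ps_sub_fin: "(T::nat set) \<subseteq> {1..n} \<Longrightarrow> finite T \<and> 0 \<notin> T"
proof -
  assume T: "T \<subseteq> {1..n}"
  then have "finite T" using finite_subset[OF T] by simp
  moreover have "0 \<notin> T" using T by auto
  ultimately show ?thesis by simp
qed

lemma even_lt: "1 \<le> j \<Longrightarrow> T \<subseteq> {1..n} \<Longrightarrow> even (card {y \<in> ps T. y < 2*j-1})"
proof -
  assume j: "1 \<le> j" and T: "T \<subseteq> {1..n}"
  have "{l\<in>T. l<j} \<subseteq> {1..n}" using T by auto
  then have "card (ps {l\<in>T. l<j}) = 2 * card {l\<in>T. l<j}" using ps_sub_fin card_ps by blast
  then show ?thesis unfolding lt_ps[OF j] by simp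
qed

lemma even_gt: "1 \<le> j \<Longrightarrow> j \<notin> T \<Longrightarrow> T \<subseteq> {1..n} \<Longrightarrow> even (card {y \<in> ps T. 2*j-1 < y})"
proof -
  assume j: "1 \<le> j" "j \<notin> T" and T: "T \<subseteq> {1..n}"
  have "{l\<in>T. j<l} \<subseteq> {1..n}" using T by auto
  then have "card (ps {l\<in>T. j<l}) = 2 * card {l\<in>T. j<l}" using ps_sub_fin card_ps by blast
  then show ?thesis unfolding gt_ps[OF j] by simp
qed

lemma signs:
  assumes j: "1 \<le> j" and a: "2*j-1 \<in> S" and g: "good n t (S - {2*j-1})"
  shows "even (card {y\<in>S. y < 2*j-1})" "even (card {y\<in>S. 2*j-1 < y})"
proof -
  obtain T where T: "T \<subseteq> {1..n}" "card T = t" "S - {2*j-1} = ps T" using g by (auto simp: good_def)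
  have jT: "j \<notin> T" using T(3) odd_mem_ps[OF j, of T] by auto
  have "{y\<in>S. y < 2*j-1} = {y \<in> ps T. y < 2*j-1}" using T(3) by auto
  then show "even (card {y\<in>S. y < 2*j-1})" using even_lt[OF j T(1)] by simp
  have "{y\<in>S. 2*j-1 < y} = {y \<in> ps T. 2*j-1 < y}" using T(3) by auto
  then show "even (card {y\<in>S. 2*j-1 < y})" using even_gt[OF j jT T(1)] by simp
qed

lemma b_in_zero:
  assumes j: "1 \<le> j" and b: "2*j \<in> S" shows "thf n t (S - {2*j-1}) = 0"
proof (rule ccontr)
  assume "thf n t (S - {2*j-1}) \<noteq> 0"
  then have "good n t (S - {2*j-1})" unfolding thf_def by presburger
  then obtain T where T: "S - {2*j-1} = ps T" unfolding good_def by blast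
  have ne: "2*j \<noteq> 2*j-1" using j by simp
  have "2*j \<in> S - {2*j-1}" using b ne by blast
  then have "2*j \<in> ps T" unfolding T .
  then have "j \<in> T" using even_mem_ps[OF j] by simp
  then have "2*j-1 \<in> ps T" using odd_mem_ps[OF j] by simp
  then show False using T by blast
qed

lemma dodd_thf:
  assumes j: "1 \<le> j" and jn: "j \<le> n" and b: "2*j \<notin> S"
  shows "(-1) ^ card {y\<in>S. y < 2*j} * thf n s (insert (2*j) S) =
    (if 2*j-1 \<in> S then real s * thf n (s-1) (S - {2*j-1}) else 0)"
proof (cases "good n s (insert (2*j) S)")
  case True
  then obtain T where T: "T \<subseteq> {1..n}" "card T = s" "insert (2*j) S = ps T" unfolding good_def by blast
  have ne: "2*j \<noteq> 2*j-1" using j by simp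
  have jT: "j \<in> T" using T(3) even_mem_ps[OF j, of T] by blast
  have "2*j-1 \<in> ps T" using jT odd_mem_ps[OF j, of T] by blast
  then have aS: "2*j-1 \<in> S" using T(3) ne by (metis insert_iff)
  have Sm: "S - {2*j-1} = ps (T - {j})"
  proof -
    have "S - {2*j-1} = insert (2*j) S - pr j" using b ne unfolding pr_def by blast
    then show ?thesis using T(3) ps_minus[OF j] by simp
  qed
  have fT: "finite T" using T(1) finite_subset by blast
  have s1: "s = Suc (s - 1)" using jT fT T(2) by (cases s) auto
  have cT: "card (T - {j}) = s - 1" using fT jT T(2) by simp
  have g: "good n (s-1) (S - {2*j-1})" unfolding good_def
    using Sm T(1) cT by (intro exI[of _ "T - {j}"]) auto
  have fS: "finite S" using good_fin[OF True] by simp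
  have e: "{y\<in>S. y < 2*j} = insert (2*j-1) {y\<in>S. y < 2*j-1}"
  proof (rule set_eqI)
    fix y show "(y \<in> {y\<in>S. y < 2*j}) = (y \<in> insert (2*j-1) {y\<in>S. y < 2*j-1})"
      using aS j by (cases "y = 2*j-1") auto
  qed
  have "card {y\<in>S. y < 2*j} = Suc (card {y\<in>S. y < 2*j-1})"
    unfolding e using fS by (subst card_insert_disjoint) auto
  then have sg: "(-1::real) ^ card {y\<in>S. y < 2*j} = -1" using signs(1)[OF j aS g] by simp
  have t1: "thf n s (insert (2*j) S) = (-1)^s * fact s" using True by (simp add: thf_def)
  have t2: "thf n (s-1) (S - {2*j-1}) = (-1)^(s-1) * fact (s-1)" using g by (simp add: thf_def)
  have "(-1::real) * ((-1)^s * fact s) = real s * ((-1)^(s-1) * fact (s-1))"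
  proof -
    obtain s' where "s = Suc s'" using s1 by blast
    then show ?thesis by (simp add: fact_Suc)
  qed
  then show ?thesis using aS by (simp only: sg t1 t2 if_True)
next
  case False
  have "(if 2*j-1 \<in> S then real s * thf n (s-1) (S - {2*j-1}) else 0) = 0"
  proof (rule ccontr)
    assume "\<not> ?thesis"
    then have aS: "2*j-1 \<in> S" and s: "s \<noteq> 0" and g: "good n (s-1) (S - {2*j-1})"
      unfolding thf_def by (auto split: if_splits)
    obtain T where T: "T \<subseteq> {1..n}" "card T = s - 1" "S - {2*j-1} = ps T" using g unfolding good_def by blast
    have fT: "finite T" using T(1) finite_subset by blast
    have jT: "j \<notin> T" using T(3) odd_mem_ps[OF j, of T] by blast
    have "insert (2*j) S = pr j \<union> (S - {2*j-1})" using aS unfolding pr_def by blast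
    also have "\<dots> = ps (insert j T)" using T(3) ps_insert[OF j, of T] by simp
    finally have I: "insert (2*j) S = ps (insert j T)" .
    have "insert j T \<subseteq> {1..n}" using T(1) j assms by simp
    moreover have "card (insert j T) = s" using fT jT T(2) s by simp
    ultimately have "good n s (insert (2*j) S)" unfolding good_def using I by blast
    then show False using False by simp
  qed
  then show ?thesis using False by (simp add: thf_def)
qed



definition Fn :: "nat \<Rightarrow> nat \<Rightarrow> (nat \<Rightarrow> real) \<Rightarrow> nat \<Rightarrow> sfun" where
  "Fn m n c k = (\<lambda>S x. \<Sum>s=0..k. c s * (RR m x ^ (k-s) * thf n s S))"

lemma thf_inf: "\<not> finite S \<Longrightarrow> thf n s S = 0" using good_fin by (auto simp: thf_def)

lemma f_eq: "f_kpq m n k p q = Fn m n (coef_a m n k p q) k"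
proof (intro ext)
  fix S x
  show "f_kpq m n k p q S x = Fn m n (coef_a m n k p q) k S x"
    unfolding f_kpq_def Fn_def r2_pe pow_pe theta_pow mult_pe_left sf_scale_def
    by (cases "finite S") (simp_all add: fsum_apply thf_inf)
qed

lemma dodd_Fn:
  assumes j: "1 \<le> j" "j \<le> n"
  shows "sf_dodd (2*j) (Fn m n c k) = (\<lambda>S x. if 2*j \<in> S then 0 else
     \<Sum>s=0..k. c s * (RR m x ^ (k-s) * (if 2*j-1 \<in> S then real s * thf n (s-1) (S - {2*j-1}) else 0)))"
proof (intro ext)
  fix S x
  show "sf_dodd (2*j) (Fn m n c k) S x = (if 2*j \<in> S then 0 else
     \<Sum>s=0..k. c s * (RR m x ^ (k-s) * (if 2*j-1 \<in> S then real s * thf n (s-1) (S - {2*j-1}) else 0)))"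
  proof (cases "2*j \<in> S")
    case False
    have "sf_dodd (2*j) (Fn m n c k) S x = (\<Sum>s=0..k. c s * (RR m x ^ (k-s) * ((-1) ^ card {y\<in>S. y < 2*j} * thf n s (insert (2*j) S))))"
      unfolding sf_dodd_def Fn_def using False by (simp add: sum_distrib_left mult_ac)
    also have "\<dots> = (\<Sum>s=0..k. c s * (RR m x ^ (k-s) * (if 2*j-1 \<in> S then real s * thf n (s-1) (S - {2*j-1}) else 0)))"
      using dodd_thf[OF j False] by simp
    finally show ?thesis using False by simp
  qed (simp add: sf_dodd_def)
qed

lemma RR_upd: "i \<in> {1..m} \<Longrightarrow> RR m (x(i:=t)) = (RR m x - x i * x i) + t * t"
proof -
  assume i: "i \<in> {1..m}"
  have "RR m y = y i * y i + (\<Sum>l\<in>{1..m}-{i}. y l * y l)" for y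
    unfolding RR_def using i by (simp add: sum.remove)
  moreover have "(\<Sum>l\<in>{1..m}-{i}. (x(i:=t)) l * (x(i:=t)) l) = (\<Sum>l\<in>{1..m}-{i}. x l * x l)"
    by (rule sum.cong) auto
  ultimately have "RR m (x(i:=t)) = t * t + (\<Sum>l\<in>{1..m}-{i}. x l * x l)"
    and "RR m x = x i * x i + (\<Sum>l\<in>{1..m}-{i}. x l * x l)" by (metis fun_upd_same)+
  then show ?thesis by simp
qed

lemma dx_Fn:
  assumes i: "1 \<le> i" "i \<le> m"
  shows "sf_dx i (Fn m n c k) = (\<lambda>S x. \<Sum>s=0..k. c s * (real (k-s) * RR m x ^ (k-s-1) * (2 * x i) * thf n s S))"
proof (intro ext)
  fix S x
  define C where "C = RR m x - x i * x i"
  have e: "(\<lambda>t. Fn m n c k S (x(i := t))) = (\<lambda>t. \<Sum>s=0..k. c s * ((C + t*t) ^ (k-s) * thf n s S))"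
    unfolding Fn_def C_def using RR_upd[of i m x] i by simp
  have D: "((\<lambda>t. \<Sum>s=0..k. c s * ((C + t*t) ^ (k-s) * thf n s S)) has_real_derivative
     (\<Sum>s=0..k. c s * (real (k-s) * (C + x i * x i) ^ (k-s-1) * (2 * x i) * thf n s S))) (at (x i))"
    by (rule DERIV_sum) (auto intro!: derivative_eq_intros simp: algebra_simps)
  have CR: "C + x i * x i = RR m x" by (simp add: C_def)
  show "sf_dx i (Fn m n c k) S x = (\<Sum>s=0..k. c s * (real (k-s) * RR m x ^ (k-s-1) * (2 * x i) * thf n s S))"
    unfolding sf_dx_def e using DERIV_imp_deriv[OF D] CR by simp
qed

lemma alg:
  fixes c c' th :: "nat \<Rightarrow> real"
  assumes k: "k = Suc k0" and co: "\<And>t. t < k \<Longrightarrow> c (Suc t) * real (Suc t) - c t * real (k - t) = \<kappa> * c' t"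
  shows "2 * X * (\<Sum>s=0..k. c s * (R ^ (k-s) * (real s * th (s-1))))
     - (\<Sum>s=0..k. c s * (real (k-s) * R ^ (k-s-1) * (2 * X) * th s))
     = (2 * \<kappa>) * (\<Sum>t=0..k-1. c' t * (R ^ (k-1-t) * th t)) * X"
proof -
  have s1: "(\<Sum>s=0..k. c s * (R ^ (k-s) * (real s * th (s-1)))) = (\<Sum>t=0..k0. c (Suc t) * (R ^ (k0-t) * (real (Suc t) * th t)))"
    unfolding k by (subst sum.atLeast0_atMost_Suc_shift) simp
  have s2: "(\<Sum>s=0..k. c s * (real (k-s) * R ^ (k-s-1) * (2 * X) * th s)) = (\<Sum>t=0..k0. c t * (real (k-t) * R ^ (k0-t) * (2 * X) * th t))"
    unfolding k by (subst sum.atLeast0_atMost_Suc) simp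
  have "2 * X * (\<Sum>t=0..k0. c (Suc t) * (R ^ (k0-t) * (real (Suc t) * th t))) - (\<Sum>t=0..k0. c t * (real (k-t) * R ^ (k0-t) * (2 * X) * th t))
      = (\<Sum>t=0..k0. 2 * X * R ^ (k0-t) * th t * (c (Suc t) * real (Suc t) - c t * real (k - t)))"
    by (simp add: sum_distrib_left sum_subtractf[symmetric] algebra_simps)
  also have "\<dots> = (\<Sum>t=0..k0. 2 * X * R ^ (k0-t) * th t * (\<kappa> * c' t))"
  proof (rule sum.cong)
    fix t assume "t \<in> {0..k0}"
    then have "t < k" using k by simp
    from co[OF this] show "2 * X * R ^ (k0-t) * th t * (c (Suc t) * real (Suc t) - c t * real (k - t)) = 2 * X * R ^ (k0-t) * th t * (\<kappa> * c' t)"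
      by simp
  qed simp
  also have "\<dots> = (2 * \<kappa>) * (\<Sum>t=0..k-1. c' t * (R ^ (k-1-t) * th t)) * X"
    by (simp add: k sum_distrib_left sum_distrib_right algebra_simps)
  finally show ?thesis using s1 s2 by simp
qed


theorem lemma6p2:
  fixes m n p q k i j :: nat
  assumes "m \<ge> 1" and "q \<le> n" and "1 \<le> k" and "k \<le> n - q"
    and "1 \<le> i" and "i \<le> m" and "1 \<le> j" and "j \<le> n"
  shows "Lop i j (f_kpq m n k p q) =
    sf_mult (sf_mult
      (sf_scale (2 * real k * ((real m - 2 * real n) / 2 + real p + real q + real k - 1))
         (f_kpq m n (k - 1) (p + 1) (q + 1)))
      (even_var i)) (odd_var (2 * j - 1))"
proof -
  note as = assms
  define c where "c = coef_a m n k p q"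
  define c' where "c' = coef_a m n (k-1) (p+1) (q+1)"
  define K where "K = 2 * real k * ((real m - 2 * real n) / 2 + real p + real q + real k - 1)"
  have ev: "even_var i = pe (\<lambda>x. x i)" by (simp add: even_var_def pe_def)
  have sc: "sf_scale 2 (even_var i) = pe (\<lambda>x. 2 * x i)" by (simp add: sf_scale_def even_var_def pe_def fun_eq_iff)
  show ?thesis
  proof (intro ext)
    fix S x
    have L: "Lop i j (f_kpq m n k p q) S x =
      (if finite S then 2 * x i * (if 2*j \<in> S then 0 else \<Sum>s=0..k. c s * (RR m x ^ (k-s) * (if 2*j-1 \<in> S then real s * thf n (s-1) (S - {2*j-1}) else 0))) else 0)
      - (if finite S \<and> 2*j-1 \<in> S then (-1)^card{y\<in>S. y<2*j-1} * (\<Sum>s=0..k. c s * (real (k-s) * RR m x ^ (k-s-1) * (2 * x i) * thf n s (S - {2*j-1}))) else 0)"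
      unfolding Lop_def f_eq sc mult_pe_left mult_odd_left dodd_Fn[OF as(7,8)] dx_Fn[OF as(5,6)] fun_diff_def c_def
      by simp
    have R: "sf_mult (sf_mult (sf_scale K (f_kpq m n (k - 1) (p + 1) (q + 1))) (even_var i)) (odd_var (2 * j - 1)) S x
      = (if finite S \<and> 2*j-1 \<in> S then (-1)^card{y\<in>S. 2*j-1<y} * (K * (\<Sum>t=0..k-1. c' t * (RR m x^(k-1-t) * thf n t (S-{2*j-1}))) * x i) else 0)"
      unfolding ev mult_pe_right mult_odd_right f_eq sf_scale_def Fn_def c'_def by simp
    have "Lop i j (f_kpq m n k p q) S x = sf_mult (sf_mult (sf_scale K (f_kpq m n (k - 1) (p + 1) (q + 1))) (even_var i)) (odd_var (2 * j - 1)) S x"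
    proof (cases "finite S \<and> 2*j-1 \<in> S")
      case False
      then show ?thesis unfolding L R by auto
    next
      case True
      then have fS: "finite S" and aS: "2*j-1 \<in> S" by auto
      show ?thesis
      proof (cases "2*j \<in> S")
        case True
        then have z: "thf n t (S - {2*j-1}) = 0" for t using b_in_zero[OF as(7)] by blast
        show ?thesis unfolding L R z using True fS aS by simp
      next
        case bS: False
        show ?thesis
        proof (cases "\<exists>t. good n t (S - {2*j-1})")
          case False
          then have z: "thf n t (S - {2*j-1}) = 0" for t by (simp add: thf_def)
          show ?thesis unfolding L R z using bS fS aS by simp
        next
          case True
          then obtain t where g: "good n t (S - {2*j-1})" by blast
          have sg1: "(-1::real)^card{y\<in>S. y<2*j-1} = 1" using signs(1)[OF as(7) aS g] by simp
          have sg2: "(-1::real)^card{y\<in>S. 2*j-1<y} = 1" using signs(2)[OF as(7) aS g] by simp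
          obtain k0 where k0: "k = Suc k0" using as(3) by (cases k) auto
          have co: "c (Suc t) * real (Suc t) - c t * real (k - t) = (K/2) * c' t" if "t < k" for t
            unfolding c_def c'_def K_def using coef_id[OF as(1) as(3) as(4) that] by simp
          have "2 * x i * (\<Sum>s=0..k. c s * (RR m x ^ (k-s) * (real s * thf n (s-1) (S - {2*j-1}))))
             - (\<Sum>s=0..k. c s * (real (k-s) * RR m x ^ (k-s-1) * (2 * x i) * thf n s (S - {2*j-1})))
             = (2 * (K/2)) * (\<Sum>t=0..k-1. c' t * (RR m x ^ (k-1-t) * thf n t (S - {2*j-1}))) * x i"
            by (rule alg[OF k0 co])
          then show ?thesis unfolding L R sg1 sg2 using bS fS aS by simp
        qed
      qed
    qed
    then show "Lop i j (f_kpq m n k p q) S x = sf_mult (sf_mult (sf_scale (2 * real k * ((real m - 2 * real n) / 2 + real p + real q + real k - 1))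
         (f_kpq m n (k - 1) (p + 1) (q + 1))) (even_var i)) (odd_var (2 * j - 1)) S x"
      unfolding K_def .
  qed
qed

end
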